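(* Let $n\ge3$. For an SSM-recurrent configuration $c$ on $W_n$ define $m(c)\in\{0,1,2\}^n$ by $m(c)_i=0$ if $c_i=0$, $m(c)_i=2$ if $i$ is a cyclically first maximal vertex of $c$, and $m(c)_i=1$ otherwise. Then $m$ is a surjection from the set of SSM-recurrent configurations on $W_n$ onto the set of minimal SSM-recurrent configurations on $W_n$, $m(c)=c$ whenever $c$ is minimal SSM-recurrent, and $\mathrm{level}(c)=|c|-|m(c)|$, where $|c|=\sum_{i=1}^n c_i$.
   Context: $W_n$: cycle $C_n$ on $[n]$ (edges $\{i,i+1\}$, $\{n,1\}$, indices mod $n$, vertices clockwise) plus sink $0$ adjacent to all of $[n]$. For $i,j\in[n]$, $(i,j)$ is the set of vertices strictly between $i$ and $j$ going clockwise from $i$ to $j$ ($(i,i)=[n]\setminus\{i\}$). Sandpile setting: stable configurations on $W_n$ are $c\in\{0,1,2\}^n$; SSM (parameter $p\in(0,1)$: a toppling vertex sends a grain independently to each neighbour with probability $p$, grains to the sink vanish) Markov chain adds a grain at a random vertex and stabilises; SSM-recurrent = recurrent state. Known: stable $c$ is SSM-recurrent iff for all $i,j$ with $c_i=c_j=0$ some $k\in(i,j)$ has $c_k=2$. Minimal SSM-recurrent: SSM-recurrent with no other SSM-recurrent $c'$ satisfying $c'_i\le c_i$ for all $i$. A vertex $i$ is a cyclically first maximal vertex of $c$ if $c_i=2$ and there is $j\in[n]$ with $c_j=0$ and $c_k=1$ for all $k\in(j,i)$. The level of a recurrent configuration on $W_n$ is $\mathrm{level}(c)=\sum_i c_i+\deg(0)-|E(W_n)|=\sum_i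 c_i-n$. *)

theory Defs
  imports Main
begin

text \<open>Vertices of the cycle are 1..n (the sink 0 is not part of a configuration).
  A configuration is a function nat => nat, required to vanish outside {1..n}
  so that configurations are canonical objects.\<close>

type_synonym config = "nat \<Rightarrow> nat"

text \<open>Clockwise open cyclic interval (i,j): vertices strictly between i and j going
  clockwise from i; (i,i) is everything except i.\<close>
definition cyc_open :: "nat \<Rightarrow> nat \<Rightarrow> nat \<Rightarrow> nat set" where
  "cyc_open n i j = {k \<in> {1..n}.
      0 < (int k - int i) mod int n \<and>
      ((int k - int i) mod int n < (int j - int i) mod int n \<or> (int j - int i) mod int n = 0)}"

definition stable :: "nat \<Rightarrow> config \<Rightarrow> bool" where
  "stable n c \<longleftrightarrow> (\<forall>i\<in>{1..n}. c i \<le> 2) \<and> (\<forall>i. i \<notin> {1..n} \<longrightarrow> c i = 0)"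

text \<open>SSM-recurrence on W_n, via the (known) characterisation stated in the context.\<close>
definition SSM_recurrent :: "nat \<Rightarrow> config \<Rightarrow> bool" where
  "SSM_recurrent n c \<longleftrightarrow> stable n c \<and>
     (\<forall>i\<in>{1..n}. \<forall>j\<in>{1..n}. c i = 0 \<and> c j = 0 \<longrightarrow> (\<exists>k\<in>cyc_open n i j. c k = 2))"

definition minimal_SSM_recurrent :: "nat \<Rightarrow> config \<Rightarrow> bool" where
  "minimal_SSM_recurrent n c \<longleftrightarrow> SSM_recurrent n c \<and>
     \<not> (\<exists>c'. SSM_recurrent n c' \<and> c' \<noteq> c \<and> (\<forall>i\<in>{1..n}. c' i \<le> c i))"

definition cyc_first_max :: "nat \<Rightarrow> config \<Rightarrow> nat \<Rightarrow> bool" where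
  "cyc_first_max n c i \<longleftrightarrow> c i = 2 \<and>
     (\<exists>j\<in>{1..n}. c j = 0 \<and> (\<forall>k\<in>cyc_open n j i. c k = 1))"

definition mmap :: "nat \<Rightarrow> config \<Rightarrow> config" where
  "mmap n c = (\<lambda>i. if i \<notin> {1..n} \<or> c i = 0 then 0
                    else if cyc_first_max n c i then 2 else 1)"

definition csize :: "nat \<Rightarrow> config \<Rightarrow> nat" where
  "csize n c = (\<Sum>i\<in>{1..n}. c i)"

text \<open>level(c) = sum c_i + deg(0) - |E(W_n)| = sum c_i + n - 2n.\<close>
definition level :: "nat \<Rightarrow> config \<Rightarrow> int" where
  "level n c = int (csize n c) + int n - int (2 * n)"

end

theory Submission imports Defs begin

definition off :: "nat \<Rightarrow> nat \<Rightarrow> nat \<Rightarrow> nat" where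
  "off n a b = nat ((int b - int a) mod int n)"

lemma off_int: "n > 0 \<Longrightarrow> int (off n a b) = (int b - int a) mod int n"
  unfolding off_def by simp

lemma off_lt: "n > 0 \<Longrightarrow> off n a b < n"
  using off_int[of n a b] by (metis of_nat_less_iff pos_mod_bound of_nat_0_less_iff)

lemma off_0: assumes "n > 0" "a \<in> {1..n}" "b \<in> {1..n}"
  shows "off n a b = 0 \<longleftrightarrow> a = b"
proof
  assume "off n a b = 0"
  hence "(int b - int a) mod int n = 0" using off_int[OF assms(1), of a b] by simp
  hence "int n dvd (int b - int a)" by auto
  then obtain q where q: "int b - int a = int n * q" by (auto simp: dvd_def)
  have "- int n < int b - int a" "int b - int a < int n" using assms by auto
  hence "q = 0" using q assms(1)
    by (smt (verit, best) mult_less_cancel_left1 mult_minus_right mult_cancel_left1 zero_less_mult_iff)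
  thus "a = b" using q by simp
qed (simp add: off_def)

lemma off_add: assumes "n > 0" shows "off n a c = (off n a b + off n b c) mod n"
proof -
  have "int (off n a c) = ((int b - int a) + (int c - int b)) mod int n"
    using off_int[OF assms] by simp
  also have "\<dots> = ((int b - int a) mod int n + (int c - int b) mod int n) mod int n"
    by (simp add: mod_add_eq)
  also have "\<dots> = int ((off n a b + off n b c) mod n)"
    using off_int[OF assms] by (simp add: zmod_int)
  finally show ?thesis by simp
qed

lemma off_tri: assumes "n > 0" "off n a b + off n b c < n"
  shows "off n a c = off n a b + off n b c"
  using off_add[OF assms(1), of a c b] assms(2) by simp

lemma off_diff: assumes "n > 0" "off n a b \<le> off n a c"
  shows "off n b c = off n a c - off n a b"
proof -
  have e: "off n a c = (off n a b + off n b c) mod n" using off_add[OF assms(1)] .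
  have l: "off n a b < n" "off n b c < n" using off_lt assms(1) by auto
  show ?thesis
  proof (cases "off n a b + off n b c < n")
    case True thus ?thesis using e by simp
  next
    case False
    hence "(off n a b + off n b c) mod n = off n a b + off n b c - n"
      using l by (simp add: mod_if le_mod_geq)
    thus ?thesis using e l assms(2) False by linarith
  qed
qed

lemma off_neg: assumes "n > 0" "a \<in> {1..n}" "b \<in> {1..n}" "a \<noteq> b"
  shows "off n a b + off n b a = n"
proof -
  have e: "off n a a = (off n a b + off n b a) mod n" using off_add[OF assms(1)] .
  have z: "off n a a = 0" by (simp add: off_def)
  have l: "off n a b < n" "off n b a < n" using off_lt assms(1) by auto
  have p: "off n a b > 0" "off n b a > 0" using off_0 assms by auto
  show ?thesis
  proof (rule ccontr)
    assume "off n a b + off n b a \<noteq> n"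
    moreover have "off n a b + off n b a < 2*n" using l by simp
    ultimately have "(off n a b + off n b a) mod n \<noteq> 0" using p l
    proof (cases "off n a b + off n b a < n")
      case False
      hence "(off n a b + off n b a) mod n = off n a b + off n b a - n"
        using l by (simp add: le_mod_geq)
      thus ?thesis using l p \<open>off n a b + off n b a \<noteq> n\<close> False by linarith
    qed simp
    thus False using e z by simp
  qed
qed

lemma cyc_open_off: assumes "n > 0"
  shows "k \<in> cyc_open n i j \<longleftrightarrow> k \<in> {1..n} \<and> 0 < off n i k \<and> (off n i k < off n i j \<or> off n i j = 0)"
proof -
  have "\<And>a b. (int b - int a) mod int n = int (off n a b)" using off_int[OF assms] by simp
  thus ?thesis unfolding cyc_open_def by simp
qed


lemma stable_out: "stable n c \<Longrightarrow> c i \<noteq> 0 \<Longrightarrow> i \<in> {1..n}"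
  unfolding stable_def by metis

lemma exists_first:
  assumes n: "n > 0" and r: "SSM_recurrent n c" and j: "j \<in> {1..n}" "c j = 0"
  shows "\<exists>k\<in>{1..n}. c k = 2 \<and> (\<forall>a\<in>cyc_open n j k. c a = 1)
           \<and> (\<forall>k'\<in>{1..n}. c k' = 2 \<longrightarrow> off n j k \<le> off n j k')"
proof -
  have st: "stable n c" using r unfolding SSM_recurrent_def by simp
  obtain k0 where "k0 \<in> cyc_open n j j" "c k0 = 2"
    using r j unfolding SSM_recurrent_def by blast
  hence "k0 \<in> {1..n} \<and> c k0 = 2" using cyc_open_off[OF n] by blast
  then obtain k where k: "k \<in> {1..n} \<and> c k = 2"
    and kmin: "\<forall>y. y \<in> {1..n} \<and> c y = 2 \<longrightarrow> off n j k \<le> off n j y"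
    using ex_has_least_nat[of "\<lambda>k. k \<in> {1..n} \<and> c k = 2" k0 "off n j"] by blast
  have kj: "k \<noteq> j" using k j by auto
  have okj: "off n j k \<noteq> 0" using off_0[OF n j(1)] k kj by auto
  have "\<forall>a\<in>cyc_open n j k. c a = 1"
  proof
    fix a assume "a \<in> cyc_open n j k"
    hence a: "a \<in> {1..n}" "0 < off n j a" "off n j a < off n j k"
      using cyc_open_off[OF n] okj by auto
    have c2: "c a \<le> 2" using st a(1) unfolding stable_def by auto
    have n2: "c a \<noteq> 2" using kmin a by force
    have n0: "c a \<noteq> 0"
    proof
      assume "c a = 0"
      then obtain k' where "k' \<in> cyc_open n j a" "c k' = 2"
        using r j a(1) unfolding SSM_recurrent_def by blast
      hence "k' \<in> {1..n}" "off n j k' < off n j a" "c k' = 2"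
        using cyc_open_off[OF n] a(2) by auto
      thus False using kmin a(3) by force
    qed
    show "c a = 1" using c2 n2 n0 by linarith
  qed
  thus ?thesis using k kmin by blast
qed

definition Pfm :: "nat \<Rightarrow> config \<Rightarrow> nat \<Rightarrow> nat \<Rightarrow> bool" where
  "Pfm n c j i \<longleftrightarrow> j \<in> {1..n} \<and> i \<in> {1..n} \<and> c j = 0 \<and> c i = 2 \<and> (\<forall>a\<in>cyc_open n j i. c a = 1)"

lemma uniq_i:
  assumes n: "n > 0" and p1: "Pfm n c j i1" and p2: "Pfm n c j i2"
  shows "i1 = i2"
proof (rule ccontr)
  assume ne: "i1 \<noteq> i2"
  have d: "j \<in> {1..n}" "i1 \<in> {1..n}" "i2 \<in> {1..n}" "c j = 0" "c i1 = 2" "c i2 = 2"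
    using p1 p2 unfolding Pfm_def by auto
  have o1: "0 < off n j i1" "0 < off n j i2" using off_0[OF n] d by (metis gr0I zero_neq_numeral)+
  have "off n j i1 \<noteq> off n j i2"
  proof
    assume "off n j i1 = off n j i2"
    hence "off n i1 i2 = 0" using off_diff[OF n, of j i1 i2] by simp
    thus False using off_0[OF n] d ne by auto
  qed
  hence "off n j i1 < off n j i2 \<or> off n j i2 < off n j i1" by linarith
  thus False
  proof
    assume "off n j i1 < off n j i2"
    hence "i1 \<in> cyc_open n j i2" using cyc_open_off[OF n] d o1 by auto
    thus False using p2 d unfolding Pfm_def by auto
  next
    assume "off n j i2 < off n j i1"
    hence "i2 \<in> cyc_open n j i1" using cyc_open_off[OF n] d o1 by auto
    thus False using p1 d unfolding Pfm_def by auto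
  qed
qed

lemma uniq_j_aux:
  assumes n: "n > 0" and p1: "Pfm n c j1 i" and p2: "Pfm n c j2 i" and ne: "j1 \<noteq> j2"
    and lt: "off n j1 i < off n j1 j2"
  shows False
proof -
  have d: "j1 \<in> {1..n}" "j2 \<in> {1..n}" "i \<in> {1..n}" "c j1 = 0" "c j2 = 0" "c i = 2"
    using p1 p2 unfolding Pfm_def by auto
  have ng: "off n j1 j2 + off n j2 j1 = n" using off_neg[OF n d(1,2) ne] .
  have pi: "0 < off n j1 i" using off_0[OF n d(1,3)] d by (metis gr0I zero_neq_numeral)
  have pj: "0 < off n j2 j1" using off_0[OF n d(2,1)] ne by auto
  have "off n j2 j1 + off n j1 i < n" using ng lt by linarith
  hence "off n j2 i = off n j2 j1 + off n j1 i" using off_tri[OF n] by blast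
  hence "j1 \<in> cyc_open n j2 i" using cyc_open_off[OF n] d pi pj by auto
  thus False using p2 d unfolding Pfm_def by auto
qed

lemma uniq_j:
  assumes n: "n > 0" and p1: "Pfm n c j1 i" and p2: "Pfm n c j2 i"
  shows "j1 = j2"
proof (rule ccontr)
  assume ne: "j1 \<noteq> j2"
  have d: "j1 \<in> {1..n}" "j2 \<in> {1..n}" "i \<in> {1..n}" "c j1 = 0" "c j2 = 0" "c i = 2"
    using p1 p2 unfolding Pfm_def by auto
  have "off n j1 j2 \<noteq> off n j1 i"
  proof
    assume "off n j1 j2 = off n j1 i"
    hence "off n j2 i = 0" using off_diff[OF n, of j1 j2 i] by simp
    thus False using off_0[OF n d(2,3)] d by auto
  qed
  hence "off n j1 j2 < off n j1 i \<or> off n j1 i < off n j1 j2" by linarith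
  thus False
  proof
    assume "off n j1 j2 < off n j1 i"
    moreover have "0 < off n j1 j2" using off_0[OF n d(1,2)] ne by auto
    ultimately have "j2 \<in> cyc_open n j1 i" using cyc_open_off[OF n] d by auto
    thus False using p1 d unfolding Pfm_def by auto
  next
    assume "off n j1 i < off n j1 j2"
    thus False using uniq_j_aux[OF n p1 p2 ne] by blast
  qed
qed

lemma fm_iff: assumes "stable n c"
  shows "cyc_first_max n c i \<longleftrightarrow> (\<exists>j. Pfm n c j i)"
  using stable_out[OF assms, of i] unfolding cyc_first_max_def Pfm_def by auto


lemma mmap_le: assumes "stable n c" "i \<in> {1..n}" shows "mmap n c i \<le> c i"
  using assms unfolding mmap_def cyc_first_max_def stable_def by auto

lemma mmap_stable: "stable n (mmap n c)"
  unfolding mmap_def stable_def by auto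

lemma mmap_zero: "i \<in> {1..n} \<Longrightarrow> mmap n c i = 0 \<longleftrightarrow> c i = 0"
  unfolding mmap_def by auto

lemma mmap_rec: assumes n: "n > 0" and r: "SSM_recurrent n c"
  shows "SSM_recurrent n (mmap n c)"
proof -
  have st: "stable n c" using r unfolding SSM_recurrent_def by simp
  have "\<exists>k\<in>cyc_open n i j. mmap n c k = 2"
    if i: "i \<in> {1..n}" and j: "j \<in> {1..n}" and z: "mmap n c i = 0" "mmap n c j = 0" for i j
  proof -
    have ci: "c i = 0" "c j = 0" using z mmap_zero i j by auto
    obtain k where "k \<in> cyc_open n i j" "c k = 2" using r i j ci unfolding SSM_recurrent_def by blast
    hence k: "k \<in> {1..n}" "0 < off n i k" "off n i k < off n i j \<or> off n i j = 0" "c k = 2"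
      using cyc_open_off[OF n] by auto
    obtain k' where k': "k' \<in> {1..n}" "c k' = 2" "\<forall>a\<in>cyc_open n i k'. c a = 1"
      "\<forall>k''\<in>{1..n}. c k'' = 2 \<longrightarrow> off n i k' \<le> off n i k''"
      using exists_first[OF n r i ci(1)] by blast
    have "Pfm n c i k'" unfolding Pfm_def using k' i ci by auto
    hence fm: "cyc_first_max n c k'" using fm_iff[OF st] by blast
    have "0 < off n i k'" using off_0[OF n i k'(1)] k'(2) ci(1) by (metis gr0I zero_neq_numeral)
    moreover have "off n i k' \<le> off n i k" using k'(4) k by auto
    ultimately have "k' \<in> cyc_open n i j" using cyc_open_off[OF n] k k'(1) by auto
    moreover have "mmap n c k' = 2" using fm k' unfolding mmap_def by auto
    ultimately show ?thesis by blast
  qed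
  thus ?thesis using mmap_stable unfolding SSM_recurrent_def by blast
qed

lemma csize_mmap: assumes n: "n > 0" and r: "SSM_recurrent n c"
  shows "csize n (mmap n c) = n"
proof -
  have st: "stable n c" using r unfolding SSM_recurrent_def by simp
  define Rs where "Rs = {(j,i). Pfm n c j i}"
  define Z where "Z = {j\<in>{1..n}. c j = 0}"
  define F where "F = {i\<in>{1..n}. cyc_first_max n c i}"
  have fZ: "fst ` Rs = Z"
  proof
    show "fst ` Rs \<subseteq> Z" unfolding Rs_def Z_def Pfm_def by auto
    show "Z \<subseteq> fst ` Rs"
    proof
      fix j assume "j \<in> Z"
      hence j: "j \<in> {1..n}" "c j = 0" unfolding Z_def by auto
      then obtain k where "k\<in>{1..n}" "c k = 2" "\<forall>a\<in>cyc_open n j k. c a = 1"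
        using exists_first[OF n r] by blast
      hence "(j,k) \<in> Rs" unfolding Rs_def Pfm_def using j by auto
      thus "j \<in> fst ` Rs" by force
    qed
  qed
  have sF: "snd ` Rs = F"
  proof
    show "snd ` Rs \<subseteq> F" unfolding Rs_def F_def using fm_iff[OF st] by (auto simp: Pfm_def)
    show "F \<subseteq> snd ` Rs"
    proof
      fix i assume "i \<in> F"
      then obtain j where "Pfm n c j i" unfolding F_def using fm_iff[OF st] by blast
      hence "(j,i) \<in> Rs" unfolding Rs_def by auto
      thus "i \<in> snd ` Rs" by force
    qed
  qed
  have i1: "inj_on fst Rs" unfolding inj_on_def Rs_def using uniq_i[OF n] by auto
  have i2: "inj_on snd Rs" unfolding inj_on_def Rs_def using uniq_j[OF n] by auto
  have cc: "card Z = card F" using card_image[OF i1] card_image[OF i2] fZ sF by simp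
  have v: "int (mmap n c i) = 1 + of_bool (i \<in> F) - of_bool (i \<in> Z)" if "i \<in> {1..n}" for i
    using that unfolding mmap_def F_def Z_def cyc_first_max_def by auto
  have "int (csize n (mmap n c)) = (\<Sum>i\<in>{1..n}. int (mmap n c i))"
    unfolding csize_def by simp
  also have "\<dots> = (\<Sum>i\<in>{1..n}. 1 + of_bool (i \<in> F) - of_bool (i \<in> Z))"
    using v by (rule sum.cong[OF refl])
  also have "\<dots> = int n + int (card ({1..n} \<inter> F)) - int (card ({1..n} \<inter> Z))"
    by (simp add: sum.distrib sum_subtractf)
  finally have e: "int (csize n (mmap n c)) = int n + int (card ({1..n} \<inter> F)) - int (card ({1..n} \<inter> Z))" .
  have "{1..n} \<inter> F = F" "{1..n} \<inter> Z = Z" unfolding F_def Z_def by auto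
  thus ?thesis using cc e by simp
qed

theorem mainTheorem5:
  fixes n :: nat
  assumes "n \<ge> 3"
  shows "mmap n ` {c. SSM_recurrent n c} = {c. minimal_SSM_recurrent n c}
    \<and> (\<forall>c. minimal_SSM_recurrent n c \<longrightarrow> mmap n c = c)
    \<and> (\<forall>c. SSM_recurrent n c \<longrightarrow> level n c = int (csize n c) - int (csize n (mmap n c)))"
proof -
  have n: "n > 0" using assms by simp
  have fix2: "mmap n c = c" if m: "minimal_SSM_recurrent n c" for c
  proof -
    have r: "SSM_recurrent n c" using m unfolding minimal_SSM_recurrent_def by simp
    have st: "stable n c" using r unfolding SSM_recurrent_def by simp
    show ?thesis using m mmap_rec[OF n r] mmap_le[OF st] unfolding minimal_SSM_recurrent_def by blast
  qed
  have ge: "csize n c \<ge> n" if r: "SSM_recurrent n c" for c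
  proof -
    have st: "stable n c" using r unfolding SSM_recurrent_def by simp
    have "csize n (mmap n c) \<le> csize n c" unfolding csize_def
      using mmap_le[OF st] by (intro sum_mono) auto
    thus ?thesis using csize_mmap[OF n r] by simp
  qed
  have img: "minimal_SSM_recurrent n (mmap n c)" if r: "SSM_recurrent n c" for c
  proof -
    define d where "d = mmap n c"
    have rd: "SSM_recurrent n d" unfolding d_def using mmap_rec[OF n r] .
    have sd: "csize n d = n" unfolding d_def using csize_mmap[OF n r] .
    have "c' = d" if r': "SSM_recurrent n c'" and le: "\<forall>i\<in>{1..n}. c' i \<le> d i" for c'
    proof (rule ccontr)
      assume ne: "c' \<noteq> d"
      have s1: "stable n c'" "stable n d" using r' rd unfolding SSM_recurrent_def by auto
      have "\<exists>i. c' i \<noteq> d i" using ne by auto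
      then obtain i where i: "c' i \<noteq> d i" by blast
      have iin: "i \<in> {1..n}" using i s1 unfolding stable_def by metis
      have "csize n c' < csize n d" unfolding csize_def
        using le i iin by (intro sum_strict_mono_ex1) (auto simp: order.strict_iff_order)
      thus False using ge[OF r'] sd by simp
    qed
    thus ?thesis using rd unfolding minimal_SSM_recurrent_def d_def by blast
  qed
  have A: "mmap n ` {c. SSM_recurrent n c} = {c. minimal_SSM_recurrent n c}"
  proof
    show "mmap n ` {c. SSM_recurrent n c} \<subseteq> {c. minimal_SSM_recurrent n c}" using img by auto
    show "{c. minimal_SSM_recurrent n c} \<subseteq> mmap n ` {c. SSM_recurrent n c}"
    proof
      fix c assume "c \<in> {c. minimal_SSM_recurrent n c}"
      hence m: "minimal_SSM_recurrent n c" by simp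
      hence "SSM_recurrent n c" unfolding minimal_SSM_recurrent_def by simp
      moreover have "c = mmap n c" using fix2[OF m] by simp
      ultimately show "c \<in> mmap n ` {c. SSM_recurrent n c}" by blast
    qed
  qed
  have C: "level n c = int (csize n c) - int (csize n (mmap n c))" if r: "SSM_recurrent n c" for c
    using csize_mmap[OF n r] unfolding level_def by simp
  show ?thesis using A fix2 C by blast
qed

end
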